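(* Under Assumption (A), for every $t\geq 0$ and every $f\in C[0,1]$, \[ \lim_{N\to+\infty}\mathrm{Var}\big(\mu_t^N(f)\big)=\lim_{N\to+\infty}\mathrm{Var}\big(\theta_t^N(f)\big)=0. \]
   Context: Let $\lambda\in C([0,1]\times[0,1])$ and $\psi\in C[0,1]$ be positive functions. For $N\geq 1$, the $N$-urn SIR model $\{\xi_t^N\}_{t\geq 0}$ is the continuous-time Markov process on $\{-1,0,1\}^N$ (state $0$ = susceptible, $1$ = infected, $-1$ = removed) in which an infected urn $i$ becomes removed at rate $\psi(i/N)$, a susceptible urn $i$ becomes infected at rate $\frac1N\sum_{j=1}^N\lambda(\frac iN,\frac jN)1_{\{\xi(j)=1\}}$, and removed urns stay removed forever. Assumption (A): $\{\xi_0^N(i)\}_{i=1}^N$ are independent and there is $\phi\in C[0,1]$ with $P(\xi_0^N(i)=1)=\phi(\frac iN)=1-P(\xi_0^N(i)=0)$. Write $S_t^N(i)=1_{\{\xi_t^N(i)=0\}}$, $I_t^N(i)=1_{\{\xi_t^N(i)=1\}}$, $\mu_t^N(f)=\frac1N\sum_{i=1}^NI_t^N(i)f(\frac iN)$, $\theta_t^N(f)=\frac1N\sum_{i=1}^NS_t^N(i)f(\frac iN)$. *)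

theory Defs
  imports "HOL-Analysis.Analysis"
begin

text \<open>The law at time t is given by the
  transition semigroup exp(tQ) of the generator matrix Q.\<close>

definition sir_states :: "nat \<Rightarrow> (nat \<Rightarrow> int) set" where
  "sir_states N = {xi. (\<forall>i\<in>{1..N}. xi i \<in> {-1, 0, 1}) \<and> (\<forall>i. i \<notin> {1..N} \<longrightarrow> xi i = 0)}"

definition sir_rate ::
  "(real \<Rightarrow> real \<Rightarrow> real) \<Rightarrow> (real \<Rightarrow> real) \<Rightarrow> nat \<Rightarrow> (nat \<Rightarrow> int) \<Rightarrow> (nat \<Rightarrow> int) \<Rightarrow> real" where
  "sir_rate lam psi N xi eta =
     (\<Sum>i\<in>{1..N}.
        (if xi i = 1 \<and> eta = xi(i := -1) then psi (real i / real N) else 0)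
      + (if xi i = 0 \<and> eta = xi(i := 1)
         then (1 / real N) * (\<Sum>j\<in>{1..N}. lam (real i / real N) (real j / real N) * (if xi j = 1 then 1 else 0))
         else 0))"

definition sir_gen ::
  "(real \<Rightarrow> real \<Rightarrow> real) \<Rightarrow> (real \<Rightarrow> real) \<Rightarrow> nat \<Rightarrow> (nat \<Rightarrow> int) \<Rightarrow> (nat \<Rightarrow> int) \<Rightarrow> real" where
  "sir_gen lam psi N xi eta =
     (if xi = eta then - (\<Sum>zeta\<in>sir_states N - {xi}. sir_rate lam psi N xi zeta)
      else sir_rate lam psi N xi eta)"

fun matpow :: "'s set \<Rightarrow> ('s \<Rightarrow> 's \<Rightarrow> real) \<Rightarrow> nat \<Rightarrow> 's \<Rightarrow> 's \<Rightarrow> real" where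
  "matpow S Q 0 x y = (if x = y then 1 else 0)"
| "matpow S Q (Suc k) x y = (\<Sum>z\<in>S. matpow S Q k x z * Q z y)"

definition sir_trans ::
  "(real \<Rightarrow> real \<Rightarrow> real) \<Rightarrow> (real \<Rightarrow> real) \<Rightarrow> nat \<Rightarrow> real \<Rightarrow> (nat \<Rightarrow> int) \<Rightarrow> (nat \<Rightarrow> int) \<Rightarrow> real" where
  "sir_trans lam psi N t xi eta =
     (\<Sum>k. t ^ k / fact k * matpow (sir_states N) (sir_gen lam psi N) k xi eta)"

text \<open>Initial law under Assumption (A): independent urns, infected with
  probability phi(i/N), susceptible otherwise.\<close>
definition sir_init :: "(real \<Rightarrow> real) \<Rightarrow> nat \<Rightarrow> (nat \<Rightarrow> int) \<Rightarrow> real" where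
  "sir_init phi N xi =
     (\<Prod>i\<in>{1..N}. if xi i = 1 then phi (real i / real N)
                   else if xi i = 0 then 1 - phi (real i / real N) else 0)"

definition sir_expect ::
  "(real \<Rightarrow> real \<Rightarrow> real) \<Rightarrow> (real \<Rightarrow> real) \<Rightarrow> (real \<Rightarrow> real) \<Rightarrow> nat \<Rightarrow> real
   \<Rightarrow> ((nat \<Rightarrow> int) \<Rightarrow> real) \<Rightarrow> real" where
  "sir_expect lam psi phi N t F =
     (\<Sum>xi0\<in>sir_states N. \<Sum>xi\<in>sir_states N.
        sir_init phi N xi0 * sir_trans lam psi N t xi0 xi * F xi)"

definition sir_var ::
  "(real \<Rightarrow> real \<Rightarrow> real) \<Rightarrow> (real \<Rightarrow> real) \<Rightarrow> (real \<Rightarrow> real) \<Rightarrow> nat \<Rightarrow> real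
   \<Rightarrow> ((nat \<Rightarrow> int) \<Rightarrow> real) \<Rightarrow> real" where
  "sir_var lam psi phi N t F =
     sir_expect lam psi phi N t (\<lambda>xi. (F xi)\<^sup>2) - (sir_expect lam psi phi N t F)\<^sup>2"

definition mu_emp :: "nat \<Rightarrow> (real \<Rightarrow> real) \<Rightarrow> (nat \<Rightarrow> int) \<Rightarrow> real" where
  "mu_emp N f xi = (1 / real N) * (\<Sum>i\<in>{1..N}. (if xi i = 1 then 1 else 0) * f (real i / real N))"

definition theta_emp :: "nat \<Rightarrow> (real \<Rightarrow> real) \<Rightarrow> (nat \<Rightarrow> int) \<Rightarrow> real" where
  "theta_emp N f xi = (1 / real N) * (\<Sum>i\<in>{1..N}. (if xi i = 0 then 1 else 0) * f (real i / real N))"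

end

theory Submission
  imports Defs
begin


definition Ex :: "'s set \<Rightarrow> ('s \<Rightarrow> real) \<Rightarrow> ('s \<Rightarrow> real) \<Rightarrow> real" where
  "Ex S \<mu> G = (\<Sum>x\<in>S. \<mu> x * G x)"
definition Vr :: "'s set \<Rightarrow> ('s \<Rightarrow> real) \<Rightarrow> ('s \<Rightarrow> real) \<Rightarrow> real" where
  "Vr S \<mu> G = Ex S \<mu> (\<lambda>x. (G x)\<^sup>2) - (Ex S \<mu> G)\<^sup>2"
definition app :: "'s set \<Rightarrow> ('s \<Rightarrow> 's \<Rightarrow> real) \<Rightarrow> ('s \<Rightarrow> real) \<Rightarrow> 's \<Rightarrow> real" where
  "app S K G x = (\<Sum>y\<in>S. K x y * G y)"
definition mact :: "'s set \<Rightarrow> ('s \<Rightarrow> real) \<Rightarrow> ('s \<Rightarrow> 's \<Rightarrow> real) \<Rightarrow> 's \<Rightarrow> real" where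
  "mact S \<mu> K y = (\<Sum>x\<in>S. \<mu> x * K x y)"
definition stoch :: "'s set \<Rightarrow> ('s \<Rightarrow> 's \<Rightarrow> real) \<Rightarrow> bool" where
  "stoch S K \<longleftrightarrow> (\<forall>x\<in>S. \<forall>y\<in>S. 0 \<le> K x y) \<and> (\<forall>x\<in>S. (\<Sum>y\<in>S. K x y) = 1)"
definition prob :: "'s set \<Rightarrow> ('s \<Rightarrow> real) \<Rightarrow> bool" where
  "prob S \<mu> \<longleftrightarrow> (\<forall>x\<in>S. 0 \<le> \<mu> x) \<and> (\<Sum>x\<in>S. \<mu> x) = 1"



lemma Ex_mact: "finite S \<Longrightarrow> Ex S (mact S \<mu> K) G = Ex S \<mu> (app S K G)"
  unfolding Ex_def mact_def app_def
  by (simp add: sum_distrib_left sum_distrib_right mult.assoc) (rule sum.swap)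

lemma prob_mact:
  assumes "finite S" "prob S \<mu>" "stoch S K" shows "prob S (mact S \<mu> K)"
proof -
  have "(\<Sum>y\<in>S. mact S \<mu> K y) = (\<Sum>x\<in>S. \<mu> x * (\<Sum>y\<in>S. K x y))"
    unfolding mact_def by (simp add: sum_distrib_left) (rule sum.swap)
  also have "\<dots> = (\<Sum>x\<in>S. \<mu> x)" using assms(3) unfolding stoch_def by simp
  finally show ?thesis using assms(2,3) unfolding prob_def stoch_def mact_def
    by (auto intro!: sum_nonneg)
qed

lemma Vr_step:
  assumes "finite S"
  shows "Vr S (mact S \<mu> K) G = Vr S \<mu> (app S K G)
           + Ex S \<mu> (\<lambda>x. app S K (\<lambda>y. (G y)\<^sup>2) x - (app S K G x)\<^sup>2)"
proof -
  have "Ex S \<mu> (\<lambda>x. app S K (\<lambda>y. (G y)\<^sup>2) x - (app S K G x)\<^sup>2)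
      = Ex S \<mu> (app S K (\<lambda>y. (G y)\<^sup>2)) - Ex S \<mu> (\<lambda>x. (app S K G x)\<^sup>2)"
    unfolding Ex_def by (simp add: right_diff_distrib sum_subtractf)
  then show ?thesis unfolding Vr_def Ex_mact[OF assms] by simp
qed

lemma condvar_le:
  assumes "stoch S K" "x \<in> S"
  shows "app S K (\<lambda>y. (G y)\<^sup>2) x - (app S K G x)\<^sup>2 \<le> app S K (\<lambda>y. (G y - G x)\<^sup>2) x"
proof -
  have s1: "(\<Sum>y\<in>S. K x y) = 1" using assms unfolding stoch_def by auto
  have "app S K (\<lambda>y. (G y - G x)\<^sup>2) x
      = (\<Sum>y\<in>S. K x y * (G y)\<^sup>2 - 2 * G x * (K x y * G y) + (G x)\<^sup>2 * K x y)"
    unfolding app_def by (rule sum.cong) (auto simp: power2_diff algebra_simps)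
  also have "\<dots> = app S K (\<lambda>y. (G y)\<^sup>2) x - 2 * G x * app S K G x + (G x)\<^sup>2 * (\<Sum>y\<in>S. K x y)"
    unfolding app_def by (simp add: sum.distrib sum_subtractf sum_distrib_left)
  also have "\<dots> = app S K (\<lambda>y. (G y)\<^sup>2) x - (app S K G x)\<^sup>2 + (app S K G x - G x)\<^sup>2"
    using s1 by (simp add: power2_diff)
  finally show ?thesis by simp
qed

lemma Ex_mono_const:
  assumes "prob S \<mu>" "\<And>x. x \<in> S \<Longrightarrow> H x \<le> b" shows "Ex S \<mu> H \<le> b"
proof -
  have "Ex S \<mu> H \<le> (\<Sum>x\<in>S. \<mu> x * b)" unfolding Ex_def
    using assms unfolding prob_def by (auto intro!: sum_mono mult_left_mono)
  also have "\<dots> = b" using assms unfolding prob_def by (simp add: sum_distrib_right[symmetric])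
  finally show ?thesis .
qed

lemma Vr_nonneg:
  assumes "prob S \<mu>" shows "0 \<le> Vr S \<mu> G"
proof -
  define m where "m = Ex S \<mu> G"
  have s1: "(\<Sum>x\<in>S. \<mu> x) = 1" using assms unfolding prob_def by auto
  have "Ex S \<mu> (\<lambda>x. (G x - m)\<^sup>2) = (\<Sum>x\<in>S. \<mu> x * (G x)\<^sup>2 - 2 * m * (\<mu> x * G x) + m\<^sup>2 * \<mu> x)"
    unfolding Ex_def by (rule sum.cong) (auto simp: power2_diff algebra_simps)
  also have "\<dots> = Ex S \<mu> (\<lambda>x. (G x)\<^sup>2) - 2 * m * m + m\<^sup>2 * (\<Sum>x\<in>S. \<mu> x)"
    unfolding Ex_def m_def by (simp add: sum.distrib sum_subtractf sum_distrib_left)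
  also have "\<dots> = Vr S \<mu> G" using s1 by (simp add: Vr_def power2_eq_square m_def)
  finally have e: "Vr S \<mu> G = Ex S \<mu> (\<lambda>x. (G x - m)\<^sup>2)" ..
  show ?thesis unfolding e Ex_def using assms unfolding prob_def by (auto intro!: sum_nonneg)
qed

definition dst :: "'s set \<Rightarrow> ('s \<Rightarrow> 's \<Rightarrow> real) \<Rightarrow> ('s \<Rightarrow> real) \<Rightarrow> nat \<Rightarrow> 's \<Rightarrow> real" where
  "dst S K \<mu> n y = (\<Sum>x\<in>S. \<mu> x * matpow S K n x y)"

lemma dst_Suc: "finite S \<Longrightarrow> dst S K \<mu> (Suc n) = mact S (dst S K \<mu> n) K"
  unfolding dst_def mact_def
  by (auto simp: sum_distrib_left sum_distrib_right mult.assoc intro!: ext) (rule sum.swap)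

lemma dst_0: "finite S \<Longrightarrow> y \<in> S \<Longrightarrow> dst S K \<mu> 0 y = \<mu> y"
  unfolding dst_def by (simp add: if_distrib cong: if_cong)

lemma prob_dst:
  assumes "finite S" "prob S \<mu>" "stoch S K" shows "prob S (dst S K \<mu> n)"
proof (induction n)
  case 0
  then show ?case using assms(2) dst_0[OF assms(1)] unfolding prob_def by simp
next
  case (Suc n)
  then show ?case using prob_mact[OF assms(1) _ assms(3)] dst_Suc[OF assms(1)] by simp
qed

lemma Ex_cong: "(\<And>x. x \<in> S \<Longrightarrow> \<mu> x = \<nu> x) \<Longrightarrow> Ex S \<mu> G = Ex S \<nu> G"
  unfolding Ex_def by simp
lemma Vr_cong: "(\<And>x. x \<in> S \<Longrightarrow> \<mu> x = \<nu> x) \<Longrightarrow> Vr S \<mu> G = Vr S \<nu> G"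
  unfolding Vr_def using Ex_cong by metis

lemma Vr_iter:
  assumes "finite S" "prob S \<mu>" "stoch S K"
    and "\<forall>j<n. \<forall>x\<in>S. app S K (\<lambda>y. ((app S K ^^ j) F y - (app S K ^^ j) F x)\<^sup>2) x \<le> \<beta>"
  shows "Vr S (dst S K \<mu> n) F \<le> Vr S \<mu> ((app S K ^^ n) F) + real n * \<beta>"
  using assms(4)
proof (induction n arbitrary: F)
  case 0
  have "Vr S (dst S K \<mu> 0) F = Vr S \<mu> F" by (rule Vr_cong) (simp add: dst_0[OF assms(1)])
  then show ?case by simp
next
  case (Suc n)
  have h: "\<forall>j<n. \<forall>x\<in>S. app S K (\<lambda>y. ((app S K ^^ j) (app S K F) y - (app S K ^^ j) (app S K F) x)\<^sup>2) x \<le> \<beta>"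
  proof (intro allI impI ballI)
    fix j x assume "j < n" "x \<in> S"
    then show "app S K (\<lambda>y. ((app S K ^^ j) (app S K F) y - (app S K ^^ j) (app S K F) x)\<^sup>2) x \<le> \<beta>"
      using Suc.prems[rule_format, of "Suc j" x] by (simp only: funpow_Suc_right comp_def)
  qed
  have pd: "prob S (dst S K \<mu> n)" by (rule prob_dst[OF assms(1-3)])
  have "Vr S (dst S K \<mu> (Suc n)) F = Vr S (dst S K \<mu> n) (app S K F)
       + Ex S (dst S K \<mu> n) (\<lambda>x. app S K (\<lambda>y. (F y)\<^sup>2) x - (app S K F x)\<^sup>2)"
    using dst_Suc[OF assms(1)] Vr_step[OF assms(1)] by simp
  also have "Ex S (dst S K \<mu> n) (\<lambda>x. app S K (\<lambda>y. (F y)\<^sup>2) x - (app S K F x)\<^sup>2) \<le> \<beta>"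
  proof (rule Ex_mono_const[OF pd])
    fix x assume x: "x \<in> S"
    have "app S K (\<lambda>y. (F y - F x)\<^sup>2) x \<le> \<beta>" using Suc.prems x by fastforce
    then show "app S K (\<lambda>y. (F y)\<^sup>2) x - (app S K F x)\<^sup>2 \<le> \<beta>"
      using condvar_le[OF assms(3) x, of F] by linarith
  qed
  also have "Vr S (dst S K \<mu> n) (app S K F) \<le> Vr S \<mu> ((app S K ^^ n) (app S K F)) + real n * \<beta>"
    using Suc.IH[OF h] .
  finally show ?case by (simp add: funpow_swap1 algebra_simps)
qed




lemma sir_states_finite: "finite (sir_states N)"
proof -
  let ?E = "(\<lambda>g i. if i \<in> {1..N} then g i else (0::int)) ` (PiE {1..N} (\<lambda>_. {-1,0,1::int}))"
  have "sir_states N \<subseteq> ?E"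
  proof
    fix x assume x: "x \<in> sir_states N"
    let ?g = "restrict x {1..N}"
    have "?g \<in> PiE {1..N} (\<lambda>_. {-1,0,1})" using x unfolding sir_states_def by auto
    moreover have "x = (\<lambda>i. if i \<in> {1..N} then ?g i else 0)"
      using x unfolding sir_states_def by (auto intro!: ext)
    ultimately show "x \<in> ?E" by blast
  qed
  moreover have "finite ?E" by (intro finite_imageI finite_PiE) auto
  ultimately show ?thesis by (rule finite_subset)
qed

lemma upd_in: "x \<in> sir_states N \<Longrightarrow> i \<in> {1..N} \<Longrightarrow> u \<in> {-1,0,1} \<Longrightarrow> x(i:=u) \<in> sir_states N"
  unfolding sir_states_def by auto

lemma nbr_info:
  assumes "x \<in> sir_states N" "x(k:=v) \<in> sir_states N" "x(k:=v) \<noteq> x"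
  shows "k \<in> {1..N}" "v \<in> {-1,0,1}"
proof -
  show k: "k \<in> {1..N}"
  proof (rule ccontr)
    assume "k \<notin> {1..N}"
    then have "x k = 0" "v = 0" using assms(1,2) unfolding sir_states_def
      by (auto dest!: spec[of _ k])
    then show False using assms(3) by (metis fun_upd_triv)
  qed
  show "v \<in> {-1,0,1}" using assms(2) k unfolding sir_states_def by (auto dest!: bspec[of _ _ k])
qed

definition aa :: "(real \<Rightarrow> real) \<Rightarrow> nat \<Rightarrow> (nat \<Rightarrow> int) \<Rightarrow> nat \<Rightarrow> real" where
  "aa psi N x i = (if x i = 1 then psi (real i / real N) else 0)"
definition bb :: "(real \<Rightarrow> real \<Rightarrow> real) \<Rightarrow> nat \<Rightarrow> (nat \<Rightarrow> int) \<Rightarrow> nat \<Rightarrow> real" where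
  "bb lam N x i = (if x i = 0 then (1 / real N) * (\<Sum>j\<in>{1..N}. lam (real i / real N) (real j / real N) * (if x j = 1 then 1 else 0)) else 0)"

lemma delta_sum:
  fixes w :: real and H :: "'a \<Rightarrow> real"
  assumes "finite A" "P \<Longrightarrow> c \<in> A"
  shows "(\<Sum>y\<in>A. (if P \<and> y = c then w else 0) * H y) = (if P then w * H c else 0)"
proof (cases P)
  case True
  have "(\<Sum>y\<in>A. (if P \<and> y = c then w else 0) * H y) = (\<Sum>y\<in>A. if y = c then w * H y else 0)"
    using True by (intro sum.cong) auto
  also have "\<dots> = w * H c" using True assms by (simp add: sum.delta')
  finally show ?thesis using True by simp
qed simp

lemma rate_sum:
  assumes x: "x \<in> sir_states N"
  shows "(\<Sum>y\<in>sir_states N - {x}. sir_rate lam psi N x y * H y)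
       = (\<Sum>i\<in>{1..N}. aa psi N x i * H (x(i:=-1)) + bb lam N x i * H (x(i:=1)))"
proof -
  let ?A = "sir_states N - {x}"
  have fA: "finite ?A" using sir_states_finite by simp
  have "(\<Sum>y\<in>?A. sir_rate lam psi N x y * H y)
     = (\<Sum>y\<in>?A. \<Sum>i\<in>{1..N}.
         (if x i = 1 \<and> y = x(i := -1) then psi (real i / real N) else 0) * H y
       + (if x i = 0 \<and> y = x(i := 1)
         then (1 / real N) * (\<Sum>j\<in>{1..N}. lam (real i / real N) (real j / real N) * (if x j = 1 then 1 else 0))
         else 0) * H y)"
    unfolding sir_rate_def by (simp add: sum_distrib_right distrib_right)
  also have "\<dots> = (\<Sum>i\<in>{1..N}. \<Sum>y\<in>?A.
         (if x i = 1 \<and> y = x(i := -1) then psi (real i / real N) else 0) * H y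
       + (if x i = 0 \<and> y = x(i := 1)
         then (1 / real N) * (\<Sum>j\<in>{1..N}. lam (real i / real N) (real j / real N) * (if x j = 1 then 1 else 0))
         else 0) * H y)"
    by (rule sum.swap)
  also have "\<dots> = (\<Sum>i\<in>{1..N}. aa psi N x i * H (x(i:=-1)) + bb lam N x i * H (x(i:=1)))"
  proof (rule sum.cong[OF refl])
    fix i assume i: "i \<in> {1..N}"
    have c1: "x i = 1 \<Longrightarrow> x(i:=-1) \<in> ?A" using upd_in[OF x i, of "-1"]
      by (auto dest: fun_cong[of _ _ i])
    have c2: "x i = 0 \<Longrightarrow> x(i:=1) \<in> ?A" using upd_in[OF x i, of "1"]
      by (auto dest: fun_cong[of _ _ i])
    show "(\<Sum>y\<in>?A.
         (if x i = 1 \<and> y = x(i := -1) then psi (real i / real N) else 0) * H y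
       + (if x i = 0 \<and> y = x(i := 1)
         then (1 / real N) * (\<Sum>j\<in>{1..N}. lam (real i / real N) (real j / real N) * (if x j = 1 then 1 else 0))
         else 0) * H y) = aa psi N x i * H (x(i:=-1)) + bb lam N x i * H (x(i:=1))"
    proof -
      have e1: "(\<Sum>y\<in>?A. (if x i = 1 \<and> y = x(i := -1) then psi (real i / real N) else 0) * H y)
         = (if x i = 1 then psi (real i / real N) * H (x(i := -1)) else 0)"
        by (rule delta_sum[OF fA c1])
      have e2: "(\<Sum>y\<in>?A. (if x i = 0 \<and> y = x(i := 1)
         then (1 / real N) * (\<Sum>j\<in>{1..N}. lam (real i / real N) (real j / real N) * (if x j = 1 then 1 else 0))
         else 0) * H y) = (if x i = 0 then ((1 / real N) * (\<Sum>j\<in>{1..N}. lam (real i / real N) (real j / real N) * (if x j = 1 then 1 else 0))) * H (x(i := 1)) else 0)"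
        by (rule delta_sum[OF fA c2])
      show ?thesis unfolding sum.distrib e1 e2 aa_def bb_def by simp
    qed
  qed
  finally show ?thesis .
qed

definition Kh :: "(real \<Rightarrow> real \<Rightarrow> real) \<Rightarrow> (real \<Rightarrow> real) \<Rightarrow> nat \<Rightarrow> real \<Rightarrow> (nat \<Rightarrow> int) \<Rightarrow> (nat \<Rightarrow> int) \<Rightarrow> real" where
  "Kh lam psi N h x y = (if x = y then 1 else 0) + h * sir_gen lam psi N x y"

lemma gen_app:
  assumes x: "x \<in> sir_states N"
  shows "(\<Sum>y\<in>sir_states N. sir_gen lam psi N x y * G y)
     = (\<Sum>i\<in>{1..N}. aa psi N x i * (G (x(i:=-1)) - G x) + bb lam N x i * (G (x(i:=1)) - G x))"
proof -
  let ?S = "sir_states N"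
  have "(\<Sum>y\<in>?S. sir_gen lam psi N x y * G y)
      = sir_gen lam psi N x x * G x + (\<Sum>y\<in>?S - {x}. sir_gen lam psi N x y * G y)"
    using x sir_states_finite by (simp add: sum.remove)
  also have "\<dots> = (\<Sum>y\<in>?S - {x}. sir_rate lam psi N x y * (G y - G x))"
  proof -
    have "(\<Sum>y\<in>?S - {x}. sir_gen lam psi N x y * G y) = (\<Sum>y\<in>?S - {x}. sir_rate lam psi N x y * G y)"
      by (rule sum.cong) (auto simp: sir_gen_def)
    moreover have "sir_gen lam psi N x x = - (\<Sum>y\<in>?S - {x}. sir_rate lam psi N x y)"
      by (simp add: sir_gen_def)
    ultimately show ?thesis by (simp add: right_diff_distrib sum_subtractf sum_distrib_right)
  qed
  also have "\<dots> = (\<Sum>i\<in>{1..N}. aa psi N x i * (G (x(i:=-1)) - G x) + bb lam N x i * (G (x(i:=1)) - G x))"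
    by (rule rate_sum[OF x])
  finally show ?thesis .
qed

lemma Kh_app:
  assumes x: "x \<in> sir_states N"
  shows "app (sir_states N) (Kh lam psi N h) G x
     = G x + h * (\<Sum>i\<in>{1..N}. aa psi N x i * (G (x(i:=-1)) - G x) + bb lam N x i * (G (x(i:=1)) - G x))"
proof -
  have "app (sir_states N) (Kh lam psi N h) G x
     = (\<Sum>y\<in>sir_states N. (if x = y then 1 else 0) * G y) + h * (\<Sum>y\<in>sir_states N. sir_gen lam psi N x y * G y)"
    unfolding app_def Kh_def by (simp add: distrib_right sum.distrib sum_distrib_left mult.assoc)
  moreover have "(\<Sum>y\<in>sir_states N. (if x = y then 1 else 0) * G y) = G x"
  proof -
    have "(\<Sum>y\<in>sir_states N. (if x = y then 1 else 0) * G y) = (\<Sum>y\<in>sir_states N. if x = y then G y else 0)"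
      by (rule sum.cong) auto
    then show ?thesis using x sir_states_finite by simp
  qed
  ultimately show ?thesis by (simp add: gen_app[OF x])
qed




definition Lip :: "(nat \<Rightarrow> int) set \<Rightarrow> ((nat \<Rightarrow> int) \<Rightarrow> real) \<Rightarrow> real \<Rightarrow> bool" where
  "Lip S G c \<longleftrightarrow> (\<forall>x\<in>S. \<forall>k v. x(k:=v) \<in> S \<longrightarrow> \<bar>G x - G (x(k:=v))\<bar> \<le> c)"

lemma Lip_D: "Lip S G c \<Longrightarrow> x \<in> S \<Longrightarrow> x(k:=v) \<in> S \<Longrightarrow> \<bar>G x - G (x(k:=v))\<bar> \<le> c"
  unfolding Lip_def by blast

lemma Lip_mono: "Lip S G c \<Longrightarrow> c \<le> d \<Longrightarrow> Lip S G d"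
  unfolding Lip_def by force

lemma ratio_in: "i \<in> {1..N} \<Longrightarrow> real i / real N \<in> {0..1}"
  by auto

lemma sq_le_of_abs: "\<bar>d\<bar> \<le> (c::real) \<Longrightarrow> d\<^sup>2 \<le> c\<^sup>2"
  by (metis abs_le_square_iff abs_of_nonneg abs_ge_zero order_trans)

locale sirb =
  fixes lam :: "real \<Rightarrow> real \<Rightarrow> real" and psi :: "real \<Rightarrow> real" and N :: nat and Ps La :: real
  assumes psiB: "\<forall>x\<in>{0..1}. 0 \<le> psi x \<and> psi x \<le> Ps"
      and lamB: "\<forall>x\<in>{0..1}. \<forall>y\<in>{0..1}. 0 \<le> lam x y \<and> lam x y \<le> La"
begin

lemma Ps_nonneg: "0 \<le> Ps" using psiB by force
lemma La_nonneg: "0 \<le> La" using lamB by force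

lemma aa_bnd: "i \<in> {1..N} \<Longrightarrow> 0 \<le> aa psi N x i \<and> aa psi N x i \<le> Ps"
  using psiB ratio_in[of i N] Ps_nonneg unfolding aa_def by auto

lemma bb_sum_bnd: "i \<in> {1..N} \<Longrightarrow>
   0 \<le> (\<Sum>j\<in>{1..N}. lam (real i / real N) (real j / real N) * (if x j = 1 then 1 else 0))
   \<and> (\<Sum>j\<in>{1..N}. lam (real i / real N) (real j / real N) * (if x j = 1 then 1 else 0)) \<le> real N * La"
proof -
  assume i: "i \<in> {1..N}"
  have "(\<Sum>j\<in>{1..N}. lam (real i / real N) (real j / real N) * (if x j = 1 then 1 else 0)) \<le> (\<Sum>j\<in>{1..N}. La)"
    using lamB ratio_in[OF i] ratio_in La_nonneg by (intro sum_mono) auto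
  moreover have "0 \<le> (\<Sum>j\<in>{1..N}. lam (real i / real N) (real j / real N) * (if x j = 1 then 1 else 0))"
    using lamB ratio_in[OF i] ratio_in by (intro sum_nonneg) auto
  ultimately show ?thesis by simp
qed

lemma bb_bnd: "i \<in> {1..N} \<Longrightarrow> 0 \<le> bb lam N x i \<and> bb lam N x i \<le> La"
proof -
  assume i: "i \<in> {1..N}"
  then have N: "real N > 0" by auto
  note b = bb_sum_bnd[OF i, of x]
  have "(1 / real N) * (\<Sum>j\<in>{1..N}. lam (real i / real N) (real j / real N) * (if x j = 1 then 1 else 0)) \<le> La"
    using b N by (simp add: field_simps)
  then show ?thesis using b N La_nonneg unfolding bb_def by auto
qed

lemma bb_diff:
  assumes i: "i \<in> {1..N}" and ki: "k \<noteq> i"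
  shows "\<bar>bb lam N x i - bb lam N (x(k:=v)) i\<bar> \<le> La / real N"
proof (cases "x i = 0")
  case False
  then show ?thesis using ki La_nonneg unfolding bb_def by auto
next
  case True
  let ?l = "\<lambda>j. lam (real i / real N) (real j / real N)"
  let ?d = "\<lambda>j. ?l j * (if x j = 1 then 1 else 0) - ?l j * (if (x(k:=v)) j = 1 then 1 else 0)"
  have N: "real N > 0" using i by auto
  have "\<bar>\<Sum>j\<in>{1..N}. ?d j\<bar> \<le> La"
  proof (cases "k \<in> {1..N}")
    case False
    then have "(\<Sum>j\<in>{1..N}. ?d j) = 0" by (intro sum.neutral) auto
    then show ?thesis using La_nonneg by simp
  next
    case True
    have "(\<Sum>j\<in>{1..N}. ?d j) = ?d k + (\<Sum>j\<in>{1..N} - {k}. ?d j)"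
      using True by (simp add: sum.remove)
    also have "(\<Sum>j\<in>{1..N} - {k}. ?d j) = 0" by (intro sum.neutral) auto
    finally have e: "(\<Sum>j\<in>{1..N}. ?d j) = ?d k" by simp
    have "0 \<le> ?l k" "?l k \<le> La" using lamB ratio_in[OF i] ratio_in[OF True] by auto
    then show ?thesis unfolding e by auto
  qed
  then have "(1 / real N) * \<bar>\<Sum>j\<in>{1..N}. ?d j\<bar> \<le> La / real N"
    using N by (simp add: field_simps)
  moreover have "bb lam N x i - bb lam N (x(k:=v)) i = (1 / real N) * (\<Sum>j\<in>{1..N}. ?d j)"
    unfolding bb_def using True ki by (simp add: sum_subtractf right_diff_distrib)
  ultimately show ?thesis by (simp add: abs_mult)
qed

lemma rate_nonneg: "0 \<le> sir_rate lam psi N x y"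
  unfolding sir_rate_def
proof (intro sum_nonneg add_nonneg_nonneg)
  fix i assume i: "i \<in> {1..N}"
  show "0 \<le> (if x i = 1 \<and> y = x(i := - 1) then psi (real i / real N) else 0)"
    using psiB ratio_in[OF i] by auto
  show "0 \<le> (if x i = 0 \<and> y = x(i := 1) then 1 / real N * (\<Sum>j = 1..N. lam (real i / real N) (real j / real N) * (if x j = 1 then 1 else 0)) else 0)"
    using bb_sum_bnd[OF i, of x] by auto
qed

lemma total_rate_bnd:
  "(\<Sum>i\<in>I. aa psi N x i + bb lam N x i) \<le> real (card I) * (Ps + La)"
  if "I \<subseteq> {1..N}" for I
proof -
  have "(\<Sum>i\<in>I. aa psi N x i + bb lam N x i) \<le> (\<Sum>i\<in>I. Ps + La)"
    using that aa_bnd bb_bnd by (intro sum_mono add_mono) auto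
  then show ?thesis by simp
qed

lemma total_rate_nonneg:
  "0 \<le> (\<Sum>i\<in>I. aa psi N x i + bb lam N x i)" if "I \<subseteq> {1..N}" for I
  using that aa_bnd bb_bnd by (intro sum_nonneg add_nonneg_nonneg) auto

lemma stoch_Kh:
  assumes h: "0 \<le> h" "h * real N * (Ps + La) \<le> 1"
  shows "stoch (sir_states N) (Kh lam psi N h)"
  unfolding stoch_def
proof (intro conjI ballI)
  fix x y assume x: "x \<in> sir_states N" and y: "y \<in> sir_states N"
  show "0 \<le> Kh lam psi N h x y"
  proof (cases "x = y")
    case False
    then show ?thesis unfolding Kh_def sir_gen_def using rate_nonneg h by simp
  next
    case True
    have "(\<Sum>y\<in>sir_states N - {x}. sir_rate lam psi N x y) = (\<Sum>y\<in>sir_states N - {x}. sir_rate lam psi N x y * 1)"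
      by simp
    also have "\<dots> = (\<Sum>i\<in>{1..N}. aa psi N x i + bb lam N x i)"
      using rate_sum[OF x, of lam psi "\<lambda>_. 1::real"] by simp
    also have "\<dots> \<le> real N * (Ps + La)" using total_rate_bnd[of "{1..N}" x] by simp
    finally have "h * (\<Sum>y\<in>sir_states N - {x}. sir_rate lam psi N x y) \<le> 1"
      using h by (smt (verit) mult_left_mono mult.assoc)
    then show ?thesis unfolding Kh_def sir_gen_def using True by simp
  qed
next
  fix x assume x: "x \<in> sir_states N"
  have "(\<Sum>y\<in>sir_states N. Kh lam psi N h x y) = app (sir_states N) (Kh lam psi N h) (\<lambda>_. 1) x"
    unfolding app_def by simp
  also have "\<dots> = 1" by (simp add: Kh_app[OF x])
  finally show "(\<Sum>y\<in>sir_states N. Kh lam psi N h x y) = 1" .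
qed

lemma condvar_Kh:
  assumes x: "x \<in> sir_states N" and L: "Lip (sir_states N) G c" and h: "0 \<le> h"
  shows "app (sir_states N) (Kh lam psi N h) (\<lambda>y. (G y - G x)\<^sup>2) x \<le> h * real N * (Ps + La) * c\<^sup>2"
proof -
  have "(\<Sum>i\<in>{1..N}. aa psi N x i * ((G (x(i:=-1)) - G x)\<^sup>2 - (G x - G x)\<^sup>2)
         + bb lam N x i * ((G (x(i:=1)) - G x)\<^sup>2 - (G x - G x)\<^sup>2))
      \<le> (\<Sum>i\<in>{1..N}. (aa psi N x i + bb lam N x i) * c\<^sup>2)"
  proof (rule sum_mono)
    fix i assume i: "i \<in> {1..N}"
    have "\<bar>G x - G (x(i:=-1))\<bar> \<le> c" "\<bar>G x - G (x(i:=1))\<bar> \<le> c"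
      using Lip_D[OF L x upd_in[OF x i]] by auto
    then have "(G (x(i:=-1)) - G x)\<^sup>2 \<le> c\<^sup>2" "(G (x(i:=1)) - G x)\<^sup>2 \<le> c\<^sup>2"
      by (auto intro!: sq_le_of_abs simp: abs_minus_commute)
    then show "aa psi N x i * ((G (x(i:=-1)) - G x)\<^sup>2 - (G x - G x)\<^sup>2)
         + bb lam N x i * ((G (x(i:=1)) - G x)\<^sup>2 - (G x - G x)\<^sup>2) \<le> (aa psi N x i + bb lam N x i) * c\<^sup>2"
      using aa_bnd[OF i, of x] bb_bnd[OF i, of x] by (simp add: distrib_right add_mono mult_left_mono)
  qed
  also have "\<dots> = (\<Sum>i\<in>{1..N}. aa psi N x i + bb lam N x i) * c\<^sup>2" by (simp add: sum_distrib_right)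
  also have "\<dots> \<le> real N * (Ps + La) * c\<^sup>2"
    using total_rate_bnd[of "{1..N}" x] by (simp add: mult_right_mono)
  finally have "(\<Sum>i\<in>{1..N}. aa psi N x i * ((G (x(i:=-1)) - G x)\<^sup>2 - (G x - G x)\<^sup>2)
         + bb lam N x i * ((G (x(i:=1)) - G x)\<^sup>2 - (G x - G x)\<^sup>2)) \<le> real N * (Ps + La) * c\<^sup>2" .
  then show ?thesis unfolding Kh_app[OF x] using h
    by (simp add: mult_left_mono mult.assoc)
qed

end




context sirb begin

lemma Lip_Kh:
  assumes L: "Lip (sir_states N) G c" and c: "0 \<le> c" and h: "0 \<le> h" "h * real N * (Ps + La) \<le> 1"
  shows "Lip (sir_states N) (app (sir_states N) (Kh lam psi N h) G) ((1 + h * (2 * Ps + 3 * La)) * c)"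
  unfolding Lip_def
proof (intro ballI allI impI)
  let ?S = "sir_states N"
  let ?K = "app ?S (Kh lam psi N h) G"
  fix x k v assume x: "x \<in> ?S" and y0: "x(k:=v) \<in> ?S"
  define y where "y = x(k:=v)"
  have y: "y \<in> ?S" using y0 y_def by simp
  have Ps0: "0 \<le> Ps" and La0: "0 \<le> La" using Ps_nonneg La_nonneg .
  show "\<bar>?K x - ?K (x(k:=v))\<bar> \<le> (1 + h * (2 * Ps + 3 * La)) * c"
  proof (cases "y = x")
    case True
    then show ?thesis using c h Ps0 La0 y_def by simp
  next
    case False
    have k: "k \<in> {1..N}" and v: "v \<in> {-1,0,1}" using nbr_info[OF x y0] False y_def by auto
    define T where "T z i = aa psi N z i * (G (z(i:=-1)) - G z) + bb lam N z i * (G (z(i:=1)) - G z)" for z i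
    define I' where "I' = {1..N} - {k}"
    define D where "D = G x - G y"
    define A where "A = (\<Sum>i\<in>I'. aa psi N x i + bb lam N x i)"
    define U where "U i = aa psi N x i * (G (x(i:=-1)) - G (y(i:=-1))) + bb lam N x i * (G (x(i:=1)) - G (y(i:=1)))
        + (bb lam N x i - bb lam N y i) * (G (y(i:=1)) - G y)" for i
    have I'sub: "I' \<subseteq> {1..N}" unfolding I'_def by auto
    have Tsplit: "(\<Sum>i\<in>{1..N}. T z i) = T z k + (\<Sum>i\<in>I'. T z i)" for z
      unfolding I'_def using k by (simp add: sum.remove)
    have ex: "?K x = G x + h * (T x k + (\<Sum>i\<in>I'. T x i))"
      using Kh_app[OF x, of lam psi h G] Tsplit[of x] unfolding T_def by simp
    have ey: "?K y = G y + h * (T y k + (\<Sum>i\<in>I'. T y i))"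
      using Kh_app[OF y, of lam psi h G] Tsplit[of y] unfolding T_def by simp
    have e3: "T x i - T y i = - D * (aa psi N x i + bb lam N x i) + U i" if i: "i \<in> I'" for i
    proof -
      have "y i = x i" using i unfolding I'_def y_def by auto
      then have "aa psi N y i = aa psi N x i" unfolding aa_def by simp
      then show ?thesis unfolding T_def U_def D_def by (simp add: algebra_simps)
    qed
    have e4: "(\<Sum>i\<in>I'. T x i) - (\<Sum>i\<in>I'. T y i) = - D * A + (\<Sum>i\<in>I'. U i)"
    proof -
      have "(\<Sum>i\<in>I'. T x i) - (\<Sum>i\<in>I'. T y i) = (\<Sum>i\<in>I'. T x i - T y i)" by (simp add: sum_subtractf)
      also have "\<dots> = (\<Sum>i\<in>I'. - D * (aa psi N x i + bb lam N x i) + U i)" by (rule sum.cong) (auto simp: e3)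
      also have "\<dots> = - D * A + (\<Sum>i\<in>I'. U i)" unfolding A_def by (simp add: sum.distrib sum_subtractf flip: sum_distrib_left)
      finally show ?thesis .
    qed
    have main: "?K x - ?K y = D * (1 - h * A) + h * (\<Sum>i\<in>I'. U i) + h * (T x k - T y k)"
    proof -
      have "?K x - ?K y = D + h * ((\<Sum>i\<in>I'. T x i) - (\<Sum>i\<in>I'. T y i)) + h * (T x k - T y k)"
        unfolding ex ey D_def by (simp add: algebra_simps)
      then show ?thesis unfolding e4 by (simp add: algebra_simps)
    qed
    have bD: "\<bar>D\<bar> \<le> c" using Lip_D[OF L x y0] unfolding D_def y_def .
    have A0: "0 \<le> A" unfolding A_def using total_rate_nonneg[OF I'sub] .
    have "A \<le> real (card I') * (Ps + La)" unfolding A_def by (rule total_rate_bnd[OF I'sub])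
    also have "card I' \<le> N" using card_mono[OF _ I'sub] by simp
    then have "real (card I') * (Ps + La) \<le> real N * (Ps + La)" using Ps0 La0 by (simp add: mult_right_mono)
    finally have "A \<le> real N * (Ps + La)" .
    then have hA: "h * A \<le> 1" using h by (smt (verit) mult_left_mono mult.assoc)
    have bU: "\<bar>U i\<bar> \<le> (aa psi N x i + bb lam N x i) * c + (La / real N) * c" if i: "i \<in> I'" for i
    proof -
      have i1: "i \<in> {1..N}" and ik: "i \<noteq> k" using i unfolding I'_def by auto
      have tw: "y(i:=u) = (x(i:=u))(k:=v)" for u using ik unfolding y_def by (simp add: fun_upd_twist)
      have d1: "\<bar>G (x(i:=-1)) - G (y(i:=-1))\<bar> \<le> c"
        unfolding tw by (rule Lip_D[OF L upd_in[OF x i1] upd_in[OF upd_in[OF x i1] k v]]) auto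
      have d2: "\<bar>G (x(i:=1)) - G (y(i:=1))\<bar> \<le> c"
        unfolding tw by (rule Lip_D[OF L upd_in[OF x i1] upd_in[OF upd_in[OF x i1] k v]]) auto
      have d3: "\<bar>G (y(i:=1)) - G y\<bar> \<le> c"
        using Lip_D[OF L y upd_in[OF y i1, of 1]] by (simp add: abs_minus_commute)
      have d4: "\<bar>bb lam N x i - bb lam N y i\<bar> \<le> La / real N"
        unfolding y_def using bb_diff[OF i1] ik by simp
      have a0: "0 \<le> aa psi N x i" and b0: "0 \<le> bb lam N x i" using aa_bnd[OF i1] bb_bnd[OF i1] by auto
      have t1: "\<bar>aa psi N x i * (G (x(i:=-1)) - G (y(i:=-1)))\<bar> \<le> aa psi N x i * c"
        using d1 a0 by (simp add: abs_mult mult_left_mono)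
      have t2: "\<bar>bb lam N x i * (G (x(i:=1)) - G (y(i:=1)))\<bar> \<le> bb lam N x i * c"
        using d2 b0 by (simp add: abs_mult mult_left_mono)
      have t3: "\<bar>(bb lam N x i - bb lam N y i) * (G (y(i:=1)) - G y)\<bar> \<le> (La / real N) * c"
        unfolding abs_mult by (rule mult_mono[OF d4 d3]) (use La0 in auto)
      show ?thesis unfolding U_def using t1 t2 t3 by (simp add: distrib_right)
    qed
    have bSU: "\<bar>\<Sum>i\<in>I'. U i\<bar> \<le> A * c + La * c"
    proof -
      have "\<bar>\<Sum>i\<in>I'. U i\<bar> \<le> (\<Sum>i\<in>I'. \<bar>U i\<bar>)" by (rule sum_abs)
      also have "\<dots> \<le> (\<Sum>i\<in>I'. (aa psi N x i + bb lam N x i) * c + (La / real N) * c)"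
        by (rule sum_mono) (rule bU)
      also have "\<dots> = A * c + real (card I') * (La / real N) * c"
        unfolding A_def by (simp add: sum.distrib mult.assoc flip: sum_distrib_right)
      also have "real (card I') * (La / real N) * c \<le> La * c"
      proof -
        have "card I' \<le> N" using card_mono[OF _ I'sub] by simp
        moreover have "N > 0" using k by auto
        ultimately have "real (card I') * (La / real N) \<le> La" using La0
          by (simp add: field_simps mult_left_mono)
        then show ?thesis using c mult_right_mono[of "real (card I') * (La / real N)" La c] by (simp add: mult.assoc)
      qed
      finally show ?thesis by simp
    qed
    have bT: "\<bar>T z k\<bar> \<le> (Ps + La) * c" if z: "z \<in> ?S" for z
    proof -
      have d1: "\<bar>G (z(k:=-1)) - G z\<bar> \<le> c" using Lip_D[OF L z upd_in[OF z k, of "-1"]]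
        by (simp add: abs_minus_commute)
      have d2: "\<bar>G (z(k:=1)) - G z\<bar> \<le> c" using Lip_D[OF L z upd_in[OF z k, of "1"]]
        by (simp add: abs_minus_commute)
      have a: "0 \<le> aa psi N z k" "aa psi N z k \<le> Ps" and b: "0 \<le> bb lam N z k" "bb lam N z k \<le> La"
        using aa_bnd[OF k] bb_bnd[OF k] by auto
      have "\<bar>aa psi N z k * (G (z(k:=-1)) - G z)\<bar> \<le> Ps * c"
        unfolding abs_mult using a d1 c by (simp add: mult_mono)
      moreover have "\<bar>bb lam N z k * (G (z(k:=1)) - G z)\<bar> \<le> La * c"
        unfolding abs_mult using b d2 c by (simp add: mult_mono)
      ultimately show ?thesis unfolding T_def by (simp add: distrib_right)
    qed
    have f1: "\<bar>D * (1 - h * A)\<bar> \<le> c * (1 - h * A)"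
      using bD hA by (simp add: abs_mult mult_right_mono)
    have f2: "\<bar>h * (\<Sum>i\<in>I'. U i)\<bar> \<le> h * (A * c + La * c)"
      using bSU h by (simp add: abs_mult mult_left_mono)
    have "\<bar>T x k - T y k\<bar> \<le> 2 * ((Ps + La) * c)" using bT[OF x] bT[OF y] by linarith
    then have f3: "\<bar>h * (T x k - T y k)\<bar> \<le> h * (2 * ((Ps + La) * c))"
      using h by (simp add: abs_mult mult_left_mono)
    have "\<bar>?K x - ?K y\<bar> \<le> c * (1 - h * A) + h * (A * c + La * c) + h * (2 * ((Ps + La) * c))"
      unfolding main using f1 f2 f3 by linarith
    also have "\<dots> = (1 + h * (2 * Ps + 3 * La)) * c" by (simp add: algebra_simps)
    finally show ?thesis unfolding y_def .
  qed
qed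

end




definition ww :: "(real \<Rightarrow> real) \<Rightarrow> nat \<Rightarrow> nat \<Rightarrow> nat \<Rightarrow> int \<Rightarrow> real" where
  "ww phi N m i v = (if i \<le> m then (if v = 1 then phi (real i / real N) else if v = 0 then 1 - phi (real i / real N) else 0)
      else (if v = 0 then 1 else 0))"
definition nu :: "(real \<Rightarrow> real) \<Rightarrow> nat \<Rightarrow> nat \<Rightarrow> (nat \<Rightarrow> int) \<Rightarrow> real" where
  "nu phi N m x = (\<Prod>i\<in>{1..N}. ww phi N m i (x i))"
definition JJ :: "(real \<Rightarrow> real) \<Rightarrow> nat \<Rightarrow> nat \<Rightarrow> ((nat \<Rightarrow> int) \<Rightarrow> real) \<Rightarrow> (nat \<Rightarrow> int) \<Rightarrow> real" where
  "JJ phi N k G x = phi (real k / real N) * G (x(k:=1)) + (1 - phi (real k / real N)) * G (x(k:=0))"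

lemma nu_N: "nu phi N N x = sir_init phi N x"
  unfolding nu_def sir_init_def ww_def by (rule prod.cong) auto

lemma reindex_k:
  assumes k: "k \<in> {1..N}" and u: "u \<in> {-1,0,1}"
  shows "(\<Sum>x\<in>sir_states N. if x k = 0 then H (x(k:=u)) else (0::real))
       = (\<Sum>x\<in>sir_states N. if x k = u then H x else 0)"
proof -
  let ?S = "sir_states N"
  have "(\<Sum>x\<in>?S. if x k = 0 then H (x(k:=u)) else 0) = (\<Sum>x\<in>{x\<in>?S. x k = 0}. H (x(k:=u)))"
    using sir_states_finite by (simp add: sum.inter_filter)
  also have "\<dots> = (\<Sum>x\<in>{x\<in>?S. x k = u}. H x)"
  proof (rule sum.reindex_bij_witness[of _ "\<lambda>y. y(k:=0)" "\<lambda>x. x(k:=u)"])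
    fix a assume a: "a \<in> {x\<in>?S. x k = u}"
    show "(a(k:=0))(k:=u) = a" using a by auto
    show "a(k:=0) \<in> {x\<in>?S. x k = 0}" using a upd_in[OF _ k, of a 0] by auto
  next
    fix a assume a: "a \<in> {x\<in>?S. x k = 0}"
    show "(a(k:=u))(k:=0) = a" using a by auto
    show "a(k:=u) \<in> {x\<in>?S. x k = u}" using a upd_in[OF _ k u, of a] by auto
    show "H (a(k:=u)) = H (a(k:=u))" ..
  qed
  also have "\<dots> = (\<Sum>x\<in>?S. if x k = u then H x else 0)"
    using sir_states_finite by (simp add: sum.inter_filter)
  finally show ?thesis .
qed

context
  fixes phi :: "real \<Rightarrow> real" and N :: nat
  assumes phiB: "\<forall>x\<in>{0..1}. 0 \<le> phi x \<and> phi x \<le> 1"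
begin

lemma Ex_nu_step:
  assumes m: "Suc m \<le> N"
  shows "Ex (sir_states N) (nu phi N (Suc m)) G = Ex (sir_states N) (nu phi N m) (JJ phi N (Suc m) G)"
proof -
  let ?S = "sir_states N"
  define k where "k = Suc m"
  have k: "k \<in> {1..N}" using m k_def by auto
  define p where "p = phi (real k / real N)"
  define P where "P x = (\<Prod>i\<in>{1..N}-{k}. ww phi N m i (x i))" for x
  have Pupd: "P (x(k:=u)) = P x" for x u unfolding P_def by (rule prod.cong) auto
  have nuS: "nu phi N (Suc m) x = (p * (if x k = 1 then 1 else 0) + (1 - p) * (if x k = 0 then 1 else 0)) * P x" for x
  proof -
    have "nu phi N (Suc m) x = ww phi N (Suc m) k (x k) * (\<Prod>i\<in>{1..N}-{k}. ww phi N (Suc m) i (x i))"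
      unfolding nu_def using k by (simp add: prod.remove)
    also have "(\<Prod>i\<in>{1..N}-{k}. ww phi N (Suc m) i (x i)) = P x"
      unfolding P_def ww_def k_def by (rule prod.cong) auto
    finally show ?thesis unfolding ww_def p_def k_def by auto
  qed
  have nu0: "nu phi N m x = (if x k = 0 then 1 else 0) * P x" for x
  proof -
    have "nu phi N m x = ww phi N m k (x k) * P x"
      unfolding nu_def P_def using k by (simp add: prod.remove)
    then show ?thesis unfolding ww_def k_def by auto
  qed
  have "Ex ?S (nu phi N (Suc m)) G
      = p * (\<Sum>x\<in>?S. if x k = 1 then P x * G x else 0) + (1 - p) * (\<Sum>x\<in>?S. if x k = 0 then P x * G x else 0)"
  proof -
    have "Ex ?S (nu phi N (Suc m)) G = (\<Sum>x\<in>?S. p * (if x k = 1 then P x * G x else 0) + (1 - p) * (if x k = 0 then P x * G x else 0))"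
      unfolding Ex_def nuS by (rule sum.cong) auto
    then show ?thesis by (simp add: sum.distrib sum_distrib_left)
  qed
  also have "(\<Sum>x\<in>?S. if x k = 1 then P x * G x else 0) = (\<Sum>x\<in>?S. if x k = 0 then P (x(k:=1)) * G (x(k:=1)) else 0)"
    using reindex_k[OF k, of 1 "\<lambda>x. P x * G x"] by simp
  also have "\<dots> = (\<Sum>x\<in>?S. if x k = 0 then P x * G (x(k:=1)) else 0)" by (rule sum.cong[OF refl]) (metis Pupd)
  also have "(\<Sum>x\<in>?S. if x k = 0 then P x * G x else 0) = (\<Sum>x\<in>?S. if x k = 0 then P x * G (x(k:=0)) else 0)"
    by (rule sum.cong[OF refl]) (metis fun_upd_triv)
  also have "p * (\<Sum>x\<in>?S. if x k = 0 then P x * G (x(k:=1)) else 0) + (1 - p) * (\<Sum>x\<in>?S. if x k = 0 then P x * G (x(k:=0)) else 0)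
      = Ex ?S (nu phi N m) (JJ phi N (Suc m) G)"
  proof -
    have "Ex ?S (nu phi N m) (JJ phi N (Suc m) G) = (\<Sum>x\<in>?S. p * (if x k = 0 then P x * G (x(k:=1)) else 0) + (1 - p) * (if x k = 0 then P x * G (x(k:=0)) else 0))"
      unfolding Ex_def nu0 JJ_def k_def[symmetric] p_def[symmetric] by (rule sum.cong) (auto simp: algebra_simps)
    then show ?thesis by (simp add: sum.distrib sum_distrib_left)
  qed
  finally show ?thesis .
qed


lemma ww_nonneg: "i \<in> {1..N} \<Longrightarrow> 0 \<le> ww phi N m i v"
  using phiB ratio_in[of i N] unfolding ww_def by auto

lemma nu_nonneg: "0 \<le> nu phi N m x"
  unfolding nu_def by (rule prod_nonneg) (auto intro: ww_nonneg)

lemma zero_in: "(\<lambda>_. 0) \<in> sir_states N" unfolding sir_states_def by auto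

lemma Ex_nu0: "Ex (sir_states N) (nu phi N 0) G = G (\<lambda>_. 0)"
proof -
  have e: "nu phi N 0 x = (if x = (\<lambda>_. 0) then 1 else 0)" if x: "x \<in> sir_states N" for x
  proof (cases "x = (\<lambda>_. 0)")
    case True
    then show ?thesis unfolding nu_def ww_def by simp
  next
    case False
    then obtain i where "x i \<noteq> 0" by auto
    then have i: "i \<in> {1..N}" using x unfolding sir_states_def by auto
    have "nu phi N 0 x = 0" unfolding nu_def
      by (rule prod_zero) (use i \<open>x i \<noteq> 0\<close> in \<open>auto simp: ww_def\<close>)
    then show ?thesis using False by simp
  qed
  have "Ex (sir_states N) (nu phi N 0) G = (\<Sum>x\<in>sir_states N. if x = (\<lambda>_. 0) then G x else 0)"
    unfolding Ex_def by (rule sum.cong) (auto simp: e)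
  then show ?thesis using sir_states_finite zero_in by simp
qed

lemma sum_nu: "m \<le> N \<Longrightarrow> Ex (sir_states N) (nu phi N m) (\<lambda>_. 1) = 1"
proof (induction m)
  case 0
  then show ?case by (simp add: Ex_nu0)
next
  case (Suc m)
  have "JJ phi N (Suc m) (\<lambda>_. 1) = (\<lambda>_. 1)" unfolding JJ_def by auto
  then show ?case using Ex_nu_step[OF Suc.prems] Suc by simp
qed

lemma prob_nu: "m \<le> N \<Longrightarrow> prob (sir_states N) (nu phi N m)"
  using sum_nu[of m] nu_nonneg unfolding prob_def Ex_def by simp

lemma Lip_JJ:
  assumes k: "k \<in> {1..N}" and L: "Lip (sir_states N) G c" and c: "0 \<le> c"
  shows "Lip (sir_states N) (JJ phi N k G) c"
  unfolding Lip_def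
proof (intro ballI allI impI)
  fix x j v assume x: "x \<in> sir_states N" and y: "x(j:=v) \<in> sir_states N"
  define p where "p = phi (real k / real N)"
  have p: "0 \<le> p" "p \<le> 1" using phiB ratio_in[OF k] unfolding p_def by auto
  show "\<bar>JJ phi N k G x - JJ phi N k G (x(j:=v))\<bar> \<le> c"
  proof (cases "x(j:=v) = x")
    case True then show ?thesis using c by simp
  next
    case False
    have j: "j \<in> {1..N}" and v: "v \<in> {-1,0,1}" using nbr_info[OF x y False] by auto
    show ?thesis
    proof (cases "j = k")
      case True then show ?thesis using c unfolding JJ_def by simp
    next
      case jk: False
      have tw: "(x(j:=v))(k:=u) = (x(k:=u))(j:=v)" for u using jk by (simp add: fun_upd_twist)
      have d1: "\<bar>G (x(k:=1)) - G ((x(j:=v))(k:=1))\<bar> \<le> c"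
        unfolding tw by (rule Lip_D[OF L upd_in[OF x k] upd_in[OF upd_in[OF x k] j v]]) auto
      have d0: "\<bar>G (x(k:=0)) - G ((x(j:=v))(k:=0))\<bar> \<le> c"
        unfolding tw by (rule Lip_D[OF L upd_in[OF x k] upd_in[OF upd_in[OF x k] j v]]) auto
      have "JJ phi N k G x - JJ phi N k G (x(j:=v))
          = p * (G (x(k:=1)) - G ((x(j:=v))(k:=1))) + (1 - p) * (G (x(k:=0)) - G ((x(j:=v))(k:=0)))"
        unfolding JJ_def p_def by (simp add: algebra_simps)
      also have "\<bar>\<dots>\<bar> \<le> p * c + (1 - p) * c"
        using d1 d0 p by (intro order_trans[OF abs_triangle_ineq] add_mono) (auto simp: abs_mult intro!: mult_left_mono)
      finally show ?thesis by (simp add: algebra_simps)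
    qed
  qed
qed

lemma condvar_JJ:
  assumes x: "x \<in> sir_states N" and k: "k \<in> {1..N}" and L: "Lip (sir_states N) G c"
  shows "JJ phi N k (\<lambda>y. (G y)\<^sup>2) x - (JJ phi N k G x)\<^sup>2 \<le> c\<^sup>2"
proof -
  define p where "p = phi (real k / real N)"
  have p: "0 \<le> p" "p \<le> 1" using phiB ratio_in[OF k] unfolding p_def by auto
  define a where "a = G (x(k:=1))"
  define b where "b = G (x(k:=0))"
  have "\<bar>a - b\<bar> \<le> c" unfolding a_def b_def
    using Lip_D[OF L upd_in[OF x k, of 1], of k 0] upd_in[OF x k, of 0] by simp
  then have ab: "(a - b)\<^sup>2 \<le> c\<^sup>2" by (rule sq_le_of_abs)
  have e: "JJ phi N k (\<lambda>y. (G y)\<^sup>2) x - (JJ phi N k G x)\<^sup>2 = (p * (1 - p)) * (a - b)\<^sup>2"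
    unfolding JJ_def p_def[symmetric] a_def[symmetric] b_def[symmetric] by (simp add: power2_eq_square algebra_simps)
  have "p * (1 - p) \<le> 1" using p by (smt (verit) mult_left_le)
  moreover have "0 \<le> p * (1 - p)" using p by simp
  ultimately have "(p * (1 - p)) * (a - b)\<^sup>2 \<le> 1 * (a - b)\<^sup>2" by (intro mult_right_mono) auto
  then show ?thesis unfolding e using ab by simp
qed

lemma Vr_nu:
  assumes "m \<le> N" "Lip (sir_states N) G c" "0 \<le> c"
  shows "Vr (sir_states N) (nu phi N m) G \<le> real m * c\<^sup>2"
  using assms
proof (induction m arbitrary: G)
  case 0
  then show ?case unfolding Vr_def Ex_nu0 by simp
next
  case (Suc m)
  let ?S = "sir_states N"
  have k: "Suc m \<in> {1..N}" using Suc.prems by auto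
  have "Vr ?S (nu phi N (Suc m)) G = Ex ?S (nu phi N m) (JJ phi N (Suc m) (\<lambda>y. (G y)\<^sup>2)) - (Ex ?S (nu phi N m) (JJ phi N (Suc m) G))\<^sup>2"
    unfolding Vr_def Ex_nu_step[OF Suc.prems(1)] ..
  also have "\<dots> = Vr ?S (nu phi N m) (JJ phi N (Suc m) G)
      + Ex ?S (nu phi N m) (\<lambda>x. JJ phi N (Suc m) (\<lambda>y. (G y)\<^sup>2) x - (JJ phi N (Suc m) G x)\<^sup>2)"
    unfolding Vr_def Ex_def by (simp add: right_diff_distrib sum_subtractf)
  also have "Ex ?S (nu phi N m) (\<lambda>x. JJ phi N (Suc m) (\<lambda>y. (G y)\<^sup>2) x - (JJ phi N (Suc m) G x)\<^sup>2) \<le> c\<^sup>2"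
    by (rule Ex_mono_const[OF prob_nu]) (use Suc.prems condvar_JJ[OF _ k Suc.prems(2)] in auto)
  also have "Vr ?S (nu phi N m) (JJ phi N (Suc m) G) \<le> real m * c\<^sup>2"
    by (rule Suc.IH) (use Suc.prems Lip_JJ[OF k] in auto)
  finally show ?case by (simp add: algebra_simps)
qed
end




lemma Lip_gen:
  fixes g :: "int \<Rightarrow> real"
  assumes g: "\<And>a b. \<bar>g a - g b\<bar> \<le> 1" and f: "\<forall>x\<in>{0..1}. \<bar>f x\<bar> \<le> Phi"
  shows "Lip S (\<lambda>x. (1 / real N) * (\<Sum>i\<in>{1..N}. g (x i) * f (real i / real N))) (Phi / real N)"
  unfolding Lip_def
proof (intro ballI allI impI)
  fix x k v
  have Phi0: "0 \<le> Phi" using f by (meson atLeastAtMost_iff abs_ge_zero order_trans order_refl zero_le_one)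
  let ?s = "\<lambda>x. (\<Sum>i\<in>{1..N}. g (x i) * f (real i / real N))"
  have "\<bar>?s x - ?s (x(k:=v))\<bar> \<le> Phi"
  proof (cases "k \<in> {1..N}")
    case False
    then have "?s (x(k:=v)) = ?s x" by (intro sum.cong) auto
    then show ?thesis using Phi0 by simp
  next
    case True
    have "?s x - ?s (x(k:=v)) = (\<Sum>i\<in>{1..N}. g (x i) * f (real i / real N) - g ((x(k:=v)) i) * f (real i / real N))"
      by (simp add: sum_subtractf)
    also have "\<dots> = (g (x k) * f (real k / real N) - g v * f (real k / real N))
        + (\<Sum>i\<in>{1..N} - {k}. g (x i) * f (real i / real N) - g ((x(k:=v)) i) * f (real i / real N))"
      using True by (simp add: sum.remove)
    also have "(\<Sum>i\<in>{1..N} - {k}. g (x i) * f (real i / real N) - g ((x(k:=v)) i) * f (real i / real N)) = 0"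
      by (intro sum.neutral) auto
    finally have e: "?s x - ?s (x(k:=v)) = (g (x k) - g v) * f (real k / real N)" by (simp add: algebra_simps)
    have "\<bar>(g (x k) - g v) * f (real k / real N)\<bar> \<le> 1 * Phi"
      unfolding abs_mult using g[of "x k" v] f ratio_in[OF True] Phi0 by (intro mult_mono) auto
    then show ?thesis unfolding e by simp
  qed
  then have "(1 / real N) * \<bar>?s x - ?s (x(k:=v))\<bar> \<le> (1 / real N) * Phi"
    by (intro mult_left_mono) auto
  moreover have "\<bar>(1 / real N) * ?s x - (1 / real N) * ?s (x(k:=v))\<bar> = (1 / real N) * \<bar>?s x - ?s (x(k:=v))\<bar>"
    by (subst right_diff_distrib[symmetric], subst abs_mult) simp
  ultimately show "\<bar>(1 / real N) * ?s x - (1 / real N) * ?s (x(k:=v))\<bar> \<le> Phi / real N"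
    by simp
qed

lemma Lip_mu: "\<forall>x\<in>{0..1}. \<bar>f x\<bar> \<le> Phi \<Longrightarrow> Lip S (mu_emp N f) (Phi / real N)"
  using Lip_gen[of "\<lambda>u. if u = 1 then 1 else 0" f Phi S N] unfolding mu_emp_def[abs_def] by simp

lemma Lip_theta: "\<forall>x\<in>{0..1}. \<bar>f x\<bar> \<le> Phi \<Longrightarrow> Lip S (theta_emp N f) (Phi / real N)"
  using Lip_gen[of "\<lambda>u. if u = 0 then 1 else 0" f Phi S N] unfolding theta_emp_def[abs_def] by simp

lemma pascal_sum:
  fixes a :: "nat \<Rightarrow> real"
  shows "(\<Sum>k\<le>Suc n. real (Suc n choose k) * a k) = (\<Sum>k\<le>n. real (n choose k) * a k) + (\<Sum>k\<le>n. real (n choose k) * a (Suc k))"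
proof -
  have "(\<Sum>k\<le>Suc n. real (Suc n choose k) * a k) = a 0 + (\<Sum>k\<le>n. real (Suc n choose Suc k) * a (Suc k))"
    by (subst sum.atMost_Suc_shift) simp
  also have "\<dots> = a 0 + (\<Sum>k\<le>n. real (n choose Suc k) * a (Suc k)) + (\<Sum>k\<le>n. real (n choose k) * a (Suc k))"
    by (simp add: sum.distrib algebra_simps)
  also have "a 0 + (\<Sum>k\<le>n. real (n choose Suc k) * a (Suc k)) = (\<Sum>k\<le>Suc n. real (n choose k) * a k)"
    using sum.atMost_Suc_shift[of "\<lambda>k. real (n choose k) * a k" n] by simp
  also have "\<dots> = (\<Sum>k\<le>n. real (n choose k) * a k)" by simp
  finally show ?thesis .
qed

lemma matpow_binom:
  fixes Q :: "'s \<Rightarrow> 's \<Rightarrow> real"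
  assumes S: "finite S" and y: "y \<in> S"
  shows "matpow S (\<lambda>x y. (if x = y then 1 else 0) + h * Q x y) n x y
       = (\<Sum>k\<le>n. real (n choose k) * (h ^ k * matpow S Q k x y))"
  using y
proof (induction n arbitrary: y)
  case 0
  then show ?case by simp
next
  case (Suc n)
  let ?K = "\<lambda>x y. (if x = y then 1 else 0) + h * Q x y"
  have "matpow S ?K (Suc n) x y = (\<Sum>z\<in>S. matpow S ?K n x z * (if z = y then 1 else 0))
        + h * (\<Sum>z\<in>S. matpow S ?K n x z * Q z y)"
    by (simp add: distrib_left sum.distrib sum_distrib_left algebra_simps)
  also have "(\<Sum>z\<in>S. matpow S ?K n x z * (if z = y then 1 else 0)) = matpow S ?K n x y"
    using Suc.prems S by (simp add: if_distrib[of "\<lambda>u. _ * u"] cong: if_cong)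
  also have "matpow S ?K n x y = (\<Sum>k\<le>n. real (n choose k) * (h ^ k * matpow S Q k x y))"
    using Suc.IH[OF Suc.prems] .
  also have "(\<Sum>z\<in>S. matpow S ?K n x z * Q z y) = (\<Sum>z\<in>S. (\<Sum>k\<le>n. real (n choose k) * (h ^ k * matpow S Q k x z)) * Q z y)"
    by (rule sum.cong) (auto simp: Suc.IH)
  also have "\<dots> = (\<Sum>k\<le>n. real (n choose k) * (h ^ k * matpow S Q (Suc k) x y))"
    by (simp add: sum_distrib_right sum_distrib_left algebra_simps) (rule sum.swap)
  also have "h * \<dots> = (\<Sum>k\<le>n. real (n choose k) * (h ^ Suc k * matpow S Q (Suc k) x y))"
    by (simp add: sum_distrib_left algebra_simps)
  finally show ?case using pascal_sum[of n "\<lambda>k. h ^ k * matpow S Q k x y"] by simp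
qed

lemma matpow_bound:
  fixes Q :: "'s \<Rightarrow> 's \<Rightarrow> real"
  assumes S: "finite S" and y: "y \<in> S"
  shows "\<bar>matpow S Q k x y\<bar> \<le> (\<Sum>z\<in>S. \<Sum>w\<in>S. \<bar>Q z w\<bar>) ^ k"
  using y
proof (induction k arbitrary: y)
  case 0 then show ?case by simp
next
  case (Suc k)
  let ?B = "\<Sum>z\<in>S. \<Sum>w\<in>S. \<bar>Q z w\<bar>"
  have "\<bar>matpow S Q (Suc k) x y\<bar> \<le> (\<Sum>z\<in>S. \<bar>matpow S Q k x z\<bar> * \<bar>Q z y\<bar>)"
    by (simp add: abs_mult[symmetric] sum_abs)
  also have "\<dots> \<le> (\<Sum>z\<in>S. ?B ^ k * \<bar>Q z y\<bar>)"
    by (intro sum_mono mult_right_mono Suc.IH) auto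
  also have "\<dots> = ?B ^ k * (\<Sum>z\<in>S. \<bar>Q z y\<bar>)" by (simp add: sum_distrib_left)
  also have "(\<Sum>z\<in>S. \<bar>Q z y\<bar>) \<le> ?B"
    by (intro sum_mono member_le_sum) (use S Suc.prems in auto)
  then have "?B ^ k * (\<Sum>z\<in>S. \<bar>Q z y\<bar>) \<le> ?B ^ k * ?B"
    by (intro mult_left_mono) (auto intro!: zero_le_power sum_nonneg)
  finally show ?case by (simp add: algebra_simps)
qed

lemma binom_coeff_lim:
  "(\<lambda>n. real (n choose k) * (t / real n) ^ k) \<longlonglongrightarrow> t ^ k / fact k"
proof -
  have ev: "\<forall>\<^sub>F n in sequentially. real (n choose k) * (t / real n) ^ k
         = t ^ k / fact k * (\<Prod>i=0..<k. 1 - real i / real n)"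
  proof (rule eventually_sequentiallyI[of 1])
    fix n :: nat assume n: "1 \<le> n"
    have A: "real (n choose k) = (\<Prod>i=0..<k. real n - real i) / fact k"
      by (simp add: binomial_gbinomial gbinomial_prod_rev)
    moreover have B: "(\<Prod>i=0..<k. real n - real i) * (t / real n) ^ k = t ^ k * (\<Prod>i=0..<k. 1 - real i / real n)"
    proof -
      have "(\<Prod>i=0..<k. 1 - real i / real n) = (\<Prod>i=0..<k. (real n - real i) / real n)"
        using n by (intro prod.cong) (auto simp: field_simps)
      also have "\<dots> = (\<Prod>i=0..<k. real n - real i) / real n ^ k" by (simp add: prod_dividef)
      finally show ?thesis by (simp add: power_divide)
    qed
    have "real (n choose k) * (t / real n) ^ k = ((\<Prod>i=0..<k. real n - real i) * (t / real n) ^ k) / fact k"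
      unfolding A by simp
    then show "real (n choose k) * (t / real n) ^ k = t ^ k / fact k * (\<Prod>i=0..<k. 1 - real i / real n)"
      unfolding B by simp
  qed
  have "(\<lambda>n. t ^ k / fact k * (\<Prod>i=0..<k. 1 - real i / real n)) \<longlonglongrightarrow> t ^ k / fact k * (\<Prod>i=0..<k. 1 - 0)"
    by (intro tendsto_intros)
  then show ?thesis using Lim_transform_eventually[OF _ ev[THEN eventually_mono, OF sym]] by simp
qed




lemma trans_lim:
  fixes Q :: "'s \<Rightarrow> 's \<Rightarrow> real"
  assumes S: "finite S" and y: "y \<in> S"
  shows "(\<lambda>n. matpow S (\<lambda>x y. (if x = y then 1 else 0) + (t / real n) * Q x y) n x y)
          \<longlonglongrightarrow> (\<Sum>k. t ^ k / fact k * matpow S Q k x y)"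
proof -
  define B where "B = (\<Sum>z\<in>S. \<Sum>w\<in>S. \<bar>Q z w\<bar>)"
  have B0: "0 \<le> B" unfolding B_def by (intro sum_nonneg) auto
  define a where "a k n = (if k \<le> n then real (n choose k) * ((t / real n) ^ k * matpow S Q k x y) else 0)" for k n
  define M where "M k = inverse (fact k) * (\<bar>t\<bar> * B) ^ k" for k
  have eq: "matpow S (\<lambda>x y. (if x = y then 1 else 0) + (t / real n) * Q x y) n x y = (\<Sum>k. a k n)" for n
  proof -
    have "(\<Sum>k. a k n) = (\<Sum>k\<in>{..n}. a k n)" by (rule suminf_finite) (auto simp: a_def)
    also have "\<dots> = (\<Sum>k\<le>n. real (n choose k) * ((t / real n) ^ k * matpow S Q k x y))"
      unfolding a_def by simp
    finally show ?thesis using matpow_binom[OF S y, of "t / real n" Q n x] by simp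
  qed
  have lim: "(\<lambda>n. a k n) \<longlonglongrightarrow> t ^ k / fact k * matpow S Q k x y" for k
  proof -
    have "(\<lambda>n. real (n choose k) * (t / real n) ^ k * matpow S Q k x y) \<longlonglongrightarrow> t ^ k / fact k * matpow S Q k x y"
      by (intro tendsto_mult binom_coeff_lim tendsto_const)
    moreover have "\<forall>\<^sub>F n in sequentially. real (n choose k) * (t / real n) ^ k * matpow S Q k x y = a k n"
      by (rule eventually_sequentiallyI[of k]) (simp add: a_def)
    ultimately show ?thesis by (rule Lim_transform_eventually)
  qed
  have bnd: "norm (a k n) \<le> M k" for k n
  proof (cases "k \<le> n")
    case False then show ?thesis by (simp add: a_def M_def B0)
  next
    case True
    have mb: "\<bar>matpow S Q k x y\<bar> \<le> B ^ k" unfolding B_def by (rule matpow_bound[OF S y])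
    have cb: "real (n choose k) * \<bar>t / real n\<bar> ^ k \<le> \<bar>t\<bar> ^ k / fact k"
    proof (cases "n = 0")
      case True then show ?thesis using \<open>k \<le> n\<close> by simp
    next
      case False
      have "real (n choose k) * fact k \<le> real n ^ k"
        using binomial_fact_pow[of n k] by (metis of_nat_fact of_nat_le_iff of_nat_mult of_nat_power)
      then have "real (n choose k) \<le> real n ^ k / fact k" by (simp add: field_simps)
      then have "real (n choose k) * \<bar>t / real n\<bar> ^ k \<le> real n ^ k / fact k * \<bar>t / real n\<bar> ^ k"
        by (intro mult_right_mono) auto
      also have "\<dots> = \<bar>t\<bar> ^ k / fact k" using False by (simp add: power_divide field_simps)
      finally show ?thesis .
    qed
    have "norm (a k n) = real (n choose k) * \<bar>t / real n\<bar> ^ k * \<bar>matpow S Q k x y\<bar>"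
      using True by (simp add: a_def abs_mult power_abs)
    also have "\<dots> \<le> \<bar>t\<bar> ^ k / fact k * B ^ k"
      by (intro mult_mono cb mb) auto
    also have "\<dots> = M k" unfolding M_def by (simp add: power_mult_distrib field_simps)
    finally show ?thesis .
  qed
  have sM: "summable M" unfolding M_def by (rule summable_exp)
  have "((\<lambda>n. \<Sum>k. a k n) \<longlongrightarrow> (\<Sum>k. t ^ k / fact k * matpow S Q k x y)) sequentially"
    using tannerys_theorem[of a "\<lambda>k. t ^ k / fact k * matpow S Q k x y" sequentially M, OF lim _ sM]
    using bnd by (simp add: always_eventually)
  then show ?thesis unfolding eq .
qed




lemma Kh_eq: "Kh lam psi N h = (\<lambda>x y. (if x = y then 1 else 0) + h * sir_gen lam psi N x y)"
  by (simp add: Kh_def fun_eq_iff)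

lemma Ex_dst_lim:
  "(\<lambda>n. Ex (sir_states N) (dst (sir_states N) (Kh lam psi N (t / real n)) (nu phi N N) n) G)
     \<longlonglongrightarrow> sir_expect lam psi phi N t G"
proof -
  let ?S = "sir_states N"
  have fin: "finite ?S" by (rule sir_states_finite)
  have e: "Ex ?S (dst ?S (Kh lam psi N (t / real n)) (nu phi N N) n) G
      = (\<Sum>x\<in>?S. \<Sum>y\<in>?S. nu phi N N x * matpow ?S (Kh lam psi N (t / real n)) n x y * G y)" for n
    unfolding Ex_def dst_def by (simp add: sum_distrib_right) (rule sum.swap)
  have "(\<lambda>n. \<Sum>x\<in>?S. \<Sum>y\<in>?S. nu phi N N x * matpow ?S (Kh lam psi N (t / real n)) n x y * G y)
      \<longlonglongrightarrow> (\<Sum>x\<in>?S. \<Sum>y\<in>?S. nu phi N N x * sir_trans lam psi N t x y * G y)"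
  proof (intro tendsto_sum tendsto_mult tendsto_const)
    fix x y assume "x \<in> ?S" "y \<in> ?S"
    show "(\<lambda>n. matpow ?S (Kh lam psi N (t / real n)) n x y) \<longlonglongrightarrow> sir_trans lam psi N t x y"
      unfolding Kh_eq sir_trans_def by (rule trans_lim[OF fin \<open>y \<in> ?S\<close>])
  qed
  then show ?thesis unfolding e sir_expect_def nu_N .
qed

context sirb begin

lemma var_bound:
  assumes phiB: "\<forall>x\<in>{0..1}. 0 \<le> phi x \<and> phi x \<le> 1"
    and L: "Lip (sir_states N) F c0" and c0: "0 \<le> c0" and t: "0 \<le> t" and N: "1 \<le> N"
  shows "0 \<le> sir_var lam psi phi N t F \<and>
         sir_var lam psi phi N t F \<le> real N * (exp ((2 * Ps + 3 * La) * t) * c0)\<^sup>2 * (1 + t * (Ps + La))"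
proof -
  let ?S = "sir_states N"
  define C where "C = 2 * Ps + 3 * La"
  define cs where "cs = exp (C * t) * c0"
  define Bd where "Bd = real N * cs\<^sup>2 * (1 + t * (Ps + La))"
  have fin: "finite ?S" by (rule sir_states_finite)
  have Ps0: "0 \<le> Ps" and La0: "0 \<le> La" using Ps_nonneg La_nonneg .
  have C0: "0 \<le> C" unfolding C_def using Ps0 La0 by simp
  have pinit: "prob ?S (nu phi N N)" using prob_nu[OF phiB, of N N] by simp
  define V where "V n = Vr ?S (dst ?S (Kh lam psi N (t / real n)) (nu phi N N) n) F" for n
  have bound: "0 \<le> V n \<and> V n \<le> Bd" if n1: "1 \<le> n" and hn: "(t / real n) * real N * (Ps + La) \<le> 1" for n
  proof -
    define h where "h = t / real n"
    have h0: "0 \<le> h" unfolding h_def using t by simp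
    have nh: "real n * h = t" unfolding h_def using n1 by simp
    let ?K = "Kh lam psi N h"
    have st: "stoch ?S ?K" by (rule stoch_Kh[OF h0 hn[folded h_def]])
    have LipJ: "Lip ?S ((app ?S ?K ^^ j) F) ((1 + h * C) ^ j * c0)" for j
    proof (induction j)
      case 0 then show ?case using L by simp
    next
      case (Suc j)
      have "Lip ?S (app ?S ?K ((app ?S ?K ^^ j) F)) ((1 + h * (2 * Ps + 3 * La)) * ((1 + h * C) ^ j * c0))"
        by (rule Lip_Kh[OF Suc.IH _ h0 hn[folded h_def]]) (use C0 h0 c0 in simp)
      then show ?case unfolding C_def by (simp add: algebra_simps)
    qed
    have grow: "(1 + h * C) ^ j * c0 \<le> cs" if "j \<le> n" for j
    proof -
      have "(1 + h * C) ^ j \<le> (1 + h * C) ^ n" by (rule power_increasing[OF that]) (use h0 C0 in simp)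
      also have "\<dots> \<le> exp (h * C) ^ n" by (rule power_mono) (use h0 C0 in auto)
      also have "\<dots> = exp (C * t)" by (simp add: exp_of_nat_mult[symmetric] nh[symmetric] algebra_simps)
      finally show ?thesis unfolding cs_def using c0 by (simp add: mult_right_mono)
    qed
    have LipJ': "Lip ?S ((app ?S ?K ^^ j) F) cs" if "j \<le> n" for j
      by (rule Lip_mono[OF LipJ grow[OF that]])
    have cs0: "0 \<le> cs" unfolding cs_def using c0 by simp
    have "V n \<le> Vr ?S (nu phi N N) ((app ?S ?K ^^ n) F) + real n * (h * real N * (Ps + La) * cs\<^sup>2)"
      unfolding V_def h_def[symmetric]
    proof (rule Vr_iter[OF fin pinit st])
      show "\<forall>j<n. \<forall>x\<in>?S. app ?S ?K (\<lambda>y. ((app ?S ?K ^^ j) F y - (app ?S ?K ^^ j) F x)\<^sup>2) x \<le> h * real N * (Ps + La) * cs\<^sup>2"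
        using condvar_Kh[OF _ LipJ' h0] by auto
    qed
    also have "Vr ?S (nu phi N N) ((app ?S ?K ^^ n) F) \<le> real N * cs\<^sup>2"
      by (rule Vr_nu[OF phiB order_refl LipJ'[OF order_refl] cs0])
    also have "real N * cs\<^sup>2 + real n * (h * real N * (Ps + La) * cs\<^sup>2) = Bd"
      unfolding Bd_def nh[symmetric] by (simp add: algebra_simps)
    finally have "V n \<le> Bd" by simp
    moreover have "0 \<le> V n" unfolding V_def by (rule Vr_nonneg[OF prob_dst[OF fin pinit]]) (use st h_def in simp)
    ultimately show ?thesis by simp
  qed
  have ev: "\<forall>\<^sub>F n in sequentially. 0 \<le> V n \<and> V n \<le> Bd"
  proof (rule eventually_sequentiallyI[of "nat \<lceil>t * real N * (Ps + La)\<rceil> + 1"])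
    fix n assume n: "nat \<lceil>t * real N * (Ps + La)\<rceil> + 1 \<le> n"
    have "t * real N * (Ps + La) \<le> real n" using n by linarith
    then have "(t / real n) * real N * (Ps + La) \<le> 1" using n by (simp add: field_simps)
    then show "0 \<le> V n \<and> V n \<le> Bd" using bound n by simp
  qed
  have lim: "V \<longlonglongrightarrow> sir_var lam psi phi N t F"
    unfolding V_def Vr_def sir_var_def by (intro tendsto_intros Ex_dst_lim)
  have "0 \<le> sir_var lam psi phi N t F"
    by (rule tendsto_lowerbound[OF lim]) (use ev in \<open>auto elim: eventually_mono\<close>)
  moreover have "sir_var lam psi phi N t F \<le> Bd"
    by (rule tendsto_upperbound[OF lim]) (use ev in \<open>auto elim: eventually_mono\<close>)
  ultimately show ?thesis unfolding Bd_def cs_def C_def by simp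
qed

end




theorem lemma4p1:
  fixes lam :: "real \<Rightarrow> real \<Rightarrow> real" and psi phi f :: "real \<Rightarrow> real" and t :: real
  assumes lam_cont: "continuous_on ({0..1} \<times> {0..1}) (\<lambda>(x, y). lam x y)"
    and lam_pos: "\<forall>x\<in>{0..1}. \<forall>y\<in>{0..1}. lam x y > 0"
    and psi_cont: "continuous_on {0..1} psi"
    and psi_pos: "\<forall>x\<in>{0..1}. psi x > 0"
    and phi_cont: "continuous_on {0..1} phi"
    and phi_prob: "\<forall>x\<in>{0..1}. 0 \<le> phi x \<and> phi x \<le> 1"
    and f_cont: "continuous_on {0..1} f"
    and t_nonneg: "t \<ge> 0"
  shows "(\<lambda>N. sir_var lam psi phi N t (mu_emp N f)) \<longlonglongrightarrow> 0
         \<and> (\<lambda>N. sir_var lam psi phi N t (theta_emp N f)) \<longlonglongrightarrow> 0"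
proof -
  obtain Ps where Ps: "\<forall>x\<in>{0..1::real}. norm (psi x) \<le> Ps"
    using compact_imp_bounded[OF compact_continuous_image[OF psi_cont compact_Icc]]
    unfolding bounded_iff by auto
  obtain Phi where Phi: "\<forall>x\<in>{0..1::real}. norm (f x) \<le> Phi"
    using compact_imp_bounded[OF compact_continuous_image[OF f_cont compact_Icc]]
    unfolding bounded_iff by auto
  obtain La where La: "\<forall>z\<in>{0..1::real} \<times> {0..1::real}. norm ((\<lambda>(x, y). lam x y) z) \<le> La"
    using compact_imp_bounded[OF compact_continuous_image[OF lam_cont compact_Times[OF compact_Icc compact_Icc]]]
    unfolding bounded_iff by auto
  have psiB: "\<forall>x\<in>{0..1}. 0 \<le> psi x \<and> psi x \<le> Ps" proof
    fix x :: real assume x: "x \<in> {0..1}"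
    then have "0 < psi x" using psi_pos by blast
    moreover have "norm (psi x) \<le> Ps" using Ps x by blast
    ultimately show "0 \<le> psi x \<and> psi x \<le> Ps" by simp
  qed
  have lamB: "\<forall>x\<in>{0..1}. \<forall>y\<in>{0..1}. 0 \<le> lam x y \<and> lam x y \<le> La"
  proof (intro ballI conjI)
    fix x y :: real assume "x \<in> {0..1}" "y \<in> {0..1}"
    then have "0 < lam x y" using lam_pos by blast
    then show "0 \<le> lam x y" by simp
    have "(x, y) \<in> {0..1::real} \<times> {0..1::real}" using \<open>x \<in> {0..1}\<close> \<open>y \<in> {0..1}\<close> by simp
    then have "norm ((\<lambda>(x, y). lam x y) (x, y)) \<le> La" using La by blast
    then show "lam x y \<le> La" by simp
  qed
  have fB: "\<forall>x\<in>{0..1}. \<bar>f x\<bar> \<le> Phi" using Phi by simp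
  have Phi0: "0 \<le> Phi" using fB[rule_format, of 0] by simp
  have sb: "sirb lam psi Ps La" using psiB lamB by unfold_locales auto
  define Bc where "Bc = (exp ((2 * Ps + 3 * La) * t) * Phi)\<^sup>2 * (1 + t * (Ps + La))"
  have key: "(\<lambda>N. sir_var lam psi phi N t (F N)) \<longlonglongrightarrow> 0"
    if LF: "\<And>N. Lip (sir_states N) (F N) (Phi / real N)" for F
  proof (rule tendsto_sandwich[of "\<lambda>_. 0" _ _ "\<lambda>N. Bc / real N"])
    have vb: "0 \<le> sir_var lam psi phi N t (F N) \<and> sir_var lam psi phi N t (F N) \<le> Bc / real N"
      if N: "1 \<le> N" for N
    proof -
      have "0 \<le> sir_var lam psi phi N t (F N) \<and>
         sir_var lam psi phi N t (F N) \<le> real N * (exp ((2 * Ps + 3 * La) * t) * (Phi / real N))\<^sup>2 * (1 + t * (Ps + La))"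
        by (rule sirb.var_bound[OF sb phi_prob LF _ t_nonneg N]) (use Phi0 in simp)
      moreover have "real N * (exp ((2 * Ps + 3 * La) * t) * (Phi / real N))\<^sup>2 * (1 + t * (Ps + La)) = Bc / real N"
        unfolding Bc_def using N by (simp add: power2_eq_square field_simps)
      ultimately show ?thesis by simp
    qed
    show "\<forall>\<^sub>F N in sequentially. 0 \<le> sir_var lam psi phi N t (F N)"
      using vb by (auto intro: eventually_sequentiallyI[of 1])
    show "\<forall>\<^sub>F N in sequentially. sir_var lam psi phi N t (F N) \<le> Bc / real N"
      using vb by (auto intro: eventually_sequentiallyI[of 1])
    show "(\<lambda>_. 0) \<longlonglongrightarrow> (0::real)" by simp
    show "(\<lambda>N. Bc / real N) \<longlonglongrightarrow> 0" by (rule lim_const_over_n)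
  qed
  show ?thesis
  proof
    show "(\<lambda>N. sir_var lam psi phi N t (mu_emp N f)) \<longlonglongrightarrow> 0"
      by (rule key) (rule Lip_mu[OF fB])
    show "(\<lambda>N. sir_var lam psi phi N t (theta_emp N f)) \<longlonglongrightarrow> 0"
      by (rule key) (rule Lip_theta[OF fB])
  qed
qed

end
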